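(* Let $a,b,c\in\mathbb{Z}$ with $a\equiv2\pmod 4$, $b$ odd, and $ab(a+b)c$ a perfect square. Then the equation $ax^2+by^2=cz^2$ is not partition regular with respect to $x,y$.
   Context: The equation $ax^2+by^2=cz^2$ is partition regular with respect to $x,y$ if for every finite coloring of $\mathbb{N}=\{1,2,\dots\}$ there exist distinct $x,y\in\mathbb{N}$ of the same color and $z\in\mathbb{N}$ with $ax^2+by^2=cz^2$. A perfect square is $k^2$, $k\in\mathbb{Z}$. *)

theory Defs
  imports Main
begin

definition partition_regular_xy :: "int \<Rightarrow> int \<Rightarrow> int \<Rightarrow> bool" where
  "partition_regular_xy a b c \<longleftrightarrow>
     (\<forall>(r::nat) (chi::nat \<Rightarrow> nat). (\<forall>n. n \<ge> 1 \<longrightarrow> chi n < r) \<longrightarrow>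
        (\<exists>x y z::nat. x \<ge> 1 \<and> y \<ge> 1 \<and> z \<ge> 1 \<and> x \<noteq> y \<and> chi x = chi y \<and>
            a * (int x)^2 + b * (int y)^2 = c * (int z)^2))"

definition perfect_square :: "int \<Rightarrow> bool" where
  "perfect_square m \<longleftrightarrow> (\<exists>k::int. m = k^2)"

end

theory Submission
  imports Defs "HOL-Computational_Algebra.Primes"
begin

lemma dec_nat:
  fixes n :: nat assumes "n \<ge> 1"
  obtains u where "n = 2 ^ multiplicity 2 n * u" "odd u"
proof -
  have "n \<noteq> 0" using assms by auto
  from multiplicity_decompose'[OF this, of 2] show ?thesis using that by auto
qed

lemma dec_int:
  fixes n :: int assumes "n \<noteq> 0"
  obtains i u where "n = 2 ^ i * u" "odd u"
proof -
  from multiplicity_decompose'[OF assms, of 2] show ?thesis using that by auto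
qed

lemma pow2_odd_eq:
  fixes A B :: int
  assumes "2 ^ p * A = 2 ^ q * B" "odd A" "odd B"
  shows "p = q \<and> A = B"
proof -
  have "\<not> p < q"
  proof
    assume "p < q"
    then have "(2::int) ^ q = 2 ^ p * 2 ^ (q - p)" by (simp add: power_add[symmetric])
    then have "A = 2 ^ (q - p) * B" using assms(1) by simp
    moreover have "even ((2::int) ^ (q - p))" using \<open>p < q\<close> by simp
    ultimately show False using assms(2) by simp
  qed
  moreover have "\<not> q < p"
  proof
    assume "q < p"
    then have "(2::int) ^ p = 2 ^ q * 2 ^ (p - q)" by (simp add: power_add[symmetric])
    then have "B = 2 ^ (p - q) * A" using assms(1) by simp
    moreover have "even ((2::int) ^ (p - q))" using \<open>q < p\<close> by simp
    ultimately show False using assms(3) by simp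
  qed
  ultimately have "p = q" by simp
  with assms(1) show ?thesis by simp
qed

lemma odd_sq8:
  fixes n :: int assumes "odd n" shows "\<exists>X. n^2 = 8*X + 1"
proof -
  obtain p where p: "n = 2*p+1" using assms oddE by blast
  have "even (p*(p+1))" by simp
  then obtain q where "p*(p+1) = 2*q" by blast
  then have "n^2 = 8*q + 1" using p by (simp add: power2_eq_square algebra_simps)
  then show ?thesis by blast
qed

lemma final:
  fixes a' b r k :: int
  assumes "odd a'" "odd b" "k^2 = a'*b*(2*a'+b)*(a'+8*r)"
  shows False
proof -
  have "odd (a'*b*(2*a'+b)*(a'+8*r))" using assms by simp
  then have "odd (k^2)" using assms(3) by simp
  then have "odd k" by simp
  then obtain W where W: "k^2 = 8*W+1" using odd_sq8 by blast
  obtain A where A: "a'^2 = 8*A+1" using odd_sq8 assms(1) by blast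
  obtain B where B: "b^2 = 8*B+1" using odd_sq8 assms(2) by blast
  have e1: "a'*(a'+8*r) = 1 + 8*(A + r*a')" using A by (simp add: power2_eq_square algebra_simps)
  have e2: "b*(2*a'+b) = 1 + 8*B + 2*a'*b" using B by (simp add: power2_eq_square algebra_simps)
  have "a'*b*(2*a'+b)*(a'+8*r) = (a'*(a'+8*r)) * (b*(2*a'+b))" by (simp add: algebra_simps)
  also have "\<dots> = (1 + 8*(A + r*a')) * (1 + 8*B + 2*a'*b)" using e1 e2 by simp
  finally have "8*W+1 = (1 + 8*(A + r*a')) * (1 + 8*B + 2*a'*b)" using W assms(3) by simp
  then have "2*(a'*b*(1 + 8*(A + r*a'))) = 8*(W - B - (A + r*a') - 8*(A + r*a')*B)"
    by (simp add: algebra_simps)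
  then have "a'*b*(1 + 8*(A + r*a')) = 2*(2*(W - B - (A + r*a') - 8*(A + r*a')*B))" by simp
  then have "even (a'*b*(1 + 8*(A + r*a')))" by simp
  moreover have "odd (a'*b*(1 + 8*(A + r*a')))" using assms by simp
  ultimately show False by simp
qed

theorem propositionP:
  fixes a b c :: int
  assumes "a mod 4 = 2"
    and "odd b"
    and "perfect_square (a * b * (a + b) * c)"
  shows "\<not> partition_regular_xy a b c"
proof
  assume "partition_regular_xy a b c"
  then obtain x y z :: nat where xyz: "x \<ge> 1" "y \<ge> 1" "z \<ge> 1"
     "multiplicity 2 x mod 2 = multiplicity 2 y mod 2"
     "a * (int x)^2 + b * (int y)^2 = c * (int z)^2"
    unfolding partition_regular_xy_def
    apply (elim allE[where x=2] allE[where x="\<lambda>n. multiplicity 2 n mod 2"])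
    by auto
  define i where "i = multiplicity 2 x"
  define j where "j = multiplicity 2 y"
  obtain u where u: "x = 2^i*u" "odd u" using dec_nat xyz(1) i_def by blast
  obtain w where w: "y = 2^j*w" "odd w" using dec_nat xyz(2) j_def by blast
  obtain t v where v: "z = 2^t*v" "odd v" using dec_nat xyz(3) by blast
  obtain a' where a': "a = 2*a'" "odd a'"
  proof -
    have "a = 4*(a div 4) + 2" using assms(1) by presburger
    then show ?thesis using that[of "2*(a div 4)+1"] by simp
  qed
  have ij: "even (i + j)" using xyz(4) i_def j_def by presburger
  have ix: "int x = 2^i * int u" using u by simp
  have iy: "int y = 2^j * int w" using w by simp
  have iz: "int z = 2^t * int v" using v by simp
  have ou: "odd (int u)" "odd (int w)" "odd (int v)" using u w v by auto
  have eq: "2*a'*(2^i*int u)^2 + b*(2^j*int w)^2 = c*(2^t*int v)^2"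
    using xyz(5) ix iy iz a' by simp
  obtain P Q where PQ: "2*a'*(2^i*int u)^2 + b*(2^j*int w)^2 = 2^P * Q" "odd Q"
    and cases: "(j \<le> i \<and> P = 2*j) \<or> (\<exists>m. j = i + m \<and> m \<ge> 2 \<and> P = 2*i+1 \<and>
                 Q = a'*(int u)^2 + b*2^(2*m-1)*(int w)^2)"
  proof (cases "j \<le> i")
    case True
    have "2*a'*(2^i*int u)^2 + b*(2^j*int w)^2 = 2^(2*j) * (2*a'*2^(2*(i-j))*(int u)^2 + b*(int w)^2)"
    proof -
      have "2*i = 2*j + 2*(i-j)" using True by simp
      then have "(2::int)^(2*i) = 2^(2*j) * 2^(2*(i-j))" by (metis power_add)
      then show ?thesis by (simp add: power_mult_distrib power_mult[symmetric] algebra_simps)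
    qed
    moreover have "odd (2*a'*2^(2*(i-j))*(int u)^2 + b*(int w)^2)" using ou assms(2) by simp
    ultimately show ?thesis using that True by blast
  next
    case False
    define m where "m = j - i"
    have m: "j = i + m" "m \<ge> 1" using False m_def by auto
    have "m \<noteq> 1" using ij m by auto
    then have m2: "m \<ge> 2" using m by simp
    have "2*a'*(2^i*int u)^2 + b*(2^j*int w)^2 = 2^(2*i+1) * (a'*(int u)^2 + b*2^(2*m-1)*(int w)^2)"
    proof -
      have "2*j = (2*i+1) + (2*m-1)" using m m2 by simp
      then have "(2::int)^(2*j) = 2^(2*i+1) * 2^(2*m-1)" by (metis power_add)
      then show ?thesis by (simp add: power_mult_distrib power_mult[symmetric] algebra_simps)
    qed
    moreover have "odd (a'*(int u)^2 + b*2^(2*m-1)*(int w)^2)" using ou a' m2 by simp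
    ultimately show ?thesis using that m m2 by blast
  qed
  have "c \<noteq> 0"
  proof
    assume "c = 0"
    then have "2^P * Q = 0" using eq PQ(1) by simp
    then show False using PQ(2) by auto
  qed
  then obtain e c' where c': "c = 2^e * c'" "odd c'" using dec_int by blast
  have "c*(2^t*int v)^2 = 2^(e+2*t) * (c'*(int v)^2)"
    using c' by (simp add: power_mult_distrib power_mult[symmetric] power_add algebra_simps)
  then have "2^P * Q = 2^(e+2*t) * (c'*(int v)^2)" using eq PQ(1) by simp
  moreover have "odd (c'*(int v)^2)" using c'(2) ou(3) by simp
  ultimately have PE: "P = e + 2*t" "Q = c'*(int v)^2" using pow2_odd_eq[of P Q "e+2*t"] PQ(2) by blast+
  obtain k where k: "a * b * (a + b) * c = k^2" using assms(3) unfolding perfect_square_def by blast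
  have ab: "a + b = 2*a' + b" using a' by simp
  have prod: "a * b * (a + b) * c = 2^(e+1) * (a'*b*(2*a'+b)*c')"
    using a' c' ab by (simp add: algebra_simps)
  have oprod: "odd (a'*b*(2*a'+b)*c')" using a' c' assms(2) by simp
  have "k \<noteq> 0"
  proof
    assume "k = 0"
    then have "(2::int)^(e+1) * (a'*b*(2*a'+b)*c') = 0" using k prod by simp
    then have "a'*b*(2*a'+b)*c' = 0" by simp
    then show False using oprod by (metis even_zero)
  qed
  then obtain s k' where k': "k = 2^s*k'" "odd k'" using dec_int by blast
  have "k^2 = 2^(2*s) * k'^2" using k' by (simp add: power_mult_distrib power_mult[symmetric])
  then have "2^(2*s) * k'^2 = 2^(e+1) * (a'*b*(2*a'+b)*c')" using k prod by simp
  moreover have "odd (k'^2)" using k'(2) by simp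
  ultimately have SE: "2*s = e+1" "k'^2 = a'*b*(2*a'+b)*c'" using pow2_odd_eq[of "2*s" "k'^2" "e+1"] oprod by blast+
  from cases show False
  proof
    assume "j \<le> i \<and> P = 2*j"
    then show False using PE SE by presburger
  next
    assume "\<exists>m. j = i + m \<and> m \<ge> 2 \<and> P = 2*i+1 \<and> Q = a'*(int u)^2 + b*2^(2*m-1)*(int w)^2"
    then obtain m where m: "m \<ge> 2" "a'*(int u)^2 + b*2^(2*m-1)*(int w)^2 = c'*(int v)^2"
      using PE by auto
    have "2*m-1 = 3 + (2*m-4)" using m(1) by simp
    then have "(2::int)^(2*m-1) = 2^3 * 2^(2*m-4)" by (metis power_add)
    then have "(2::int)^(2*m-1) = 8 * 2^(2*m-4)" by simp
    then have m': "a'*(int u)^2 + 8*(b*2^(2*m-4)*(int w)^2) = c'*(int v)^2" using m(2) by simp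
    obtain U where U: "(int u)^2 = 8*U+1" using odd_sq8 ou(1) by blast
    obtain V where V: "(int v)^2 = 8*V+1" using odd_sq8 ou(3) by blast
    have "c' = a' + 8*(a'*U + b*2^(2*m-4)*(int w)^2 - c'*V)"
      using m' U V by (simp add: algebra_simps)
    then show False using final[OF a'(2) assms(2), of k'] SE(2) by metis
  qed
qed

end
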